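(* Let $u_0\in H^1(\mathbb S)$ with $h=\int_{\mathbb S}u_{0x}^2\neq1$, and let $u$ be a global admissible conservative weak solution with initial datum $u_0$ (defined below). For each $t\ge0$ and $\beta\in\mathbb R$, define $y(t,\beta)$ implicitly by $$y(t,\beta)+\int_0^{y(t,\beta)}u_x^2(t,z)\,dz=(1+h)\beta.$$ Then, for every $t\ge0$, the maps $\beta\mapsto y(t,\beta)$ and $\beta\mapsto u(t,y(t,\beta))$ are Lipschitz continuous with constant $1+h$.
   Context: $\mathbb S=\mathbb R/\mathbb Z$. For $w$ on $\mathbb S$ write - $\overline w=\int_{\mathbb S}w$; - $\mathbb Pw=w-\overline w$; - $\partial_x^{-1}w(x)=\int_0^x\mathbb Pw$. Test functions $\psi\in C_0^\infty(\mathbb R^+;\mathcal D(\mathbb S))$ are smooth, 1-periodic in $x$, and compactly supported in $t\in[0,\infty)$. Also $$f(t)=\frac{1}{1-h}\int_{\mathbb S}(1-u_x^2)\,\partial_x^{-1}(u-uu_x^2)\,dy.$$ A function $u\in L^\infty(\mathbb R^+;H^1(\mathbb S))$ is a global admissible conservative weak solution if all of the following hold for all test functions $\psi$. (i) $$\iint(u\psi_{tx}+u^2u_x\psi_x)=\iint\big(u-uu_x^2-\overline{u-uu_x^2}\big)\psi+\int_{\mathbb S}u_{0x}\psi(0,\cdot).$$ (ii) $$\iint(u\psi_t-\tfrac13u^3\psi_x)=-\iint\big(\partial_x^{-1}(u-uu_x^2)-f(t)\big)\psi-\int_{\mathbb S}u_0\psi(0,\cdot).$$ (iii) $\int_{\mathbb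 S}u_x^2$ and $\int_{\mathbb S}(u-uu_x^2)$ are constant in time. (iv) $$\iint(u_x^2\psi_t-u^2u_x^2\psi_x)=-\iint\big((u^2)_x-2u_x\overline{u-uu_x^2}\big)\psi-\int_{\mathbb S}u_{0x}^2\psi(0,\cdot).$$ Here all double integrals are over $\mathbb R^+\times\mathbb S$. *)

theory Defs
  imports "HOL-Analysis.Analysis"
begin

text \<open>Functions on the circle S = R/Z are represented as 1-periodic functions on R.
  Space-time functions are curried: u t x.\<close>

text \<open>H^1(S): v is the (continuous) absolutely continuous representative with weak derivative vx,
  vx square integrable over one period.\<close>
definition H1rep :: "(real \<Rightarrow> real) \<Rightarrow> (real \<Rightarrow> real) \<Rightarrow> bool" where
  "H1rep v vx \<longleftrightarrow> (\<forall>x. v (x + 1) = v x) \<and> (\<forall>x. vx (x + 1) = vx x) \<and>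
     vx \<in> borel_measurable lborel \<and>
     set_integrable lborel {0..1} (\<lambda>x. (vx x)^2) \<and>
     (\<forall>x. v x = v 0 + (LBINT z=ereal 0..ereal x. vx z))"

definition cmean :: "(real \<Rightarrow> real) \<Rightarrow> real" where
  "cmean w = (LBINT x:{0..1}. w x)"

definition Pproj :: "(real \<Rightarrow> real) \<Rightarrow> real \<Rightarrow> real" where
  "Pproj w x = w x - cmean w"

definition dxinv :: "(real \<Rightarrow> real) \<Rightarrow> real \<Rightarrow> real" where
  "dxinv w x = (LBINT y=ereal 0..ereal x. Pproj w y)"

definition pt :: "(real \<Rightarrow> real \<Rightarrow> real) \<Rightarrow> real \<Rightarrow> real \<Rightarrow> real" where
  "pt \<psi> t x = deriv (\<lambda>s. \<psi> s x) t"

definition px :: "(real \<Rightarrow> real \<Rightarrow> real) \<Rightarrow> real \<Rightarrow> real \<Rightarrow> real" where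
  "px \<psi> t x = deriv (\<lambda>y. \<psi> t y) x"

fun dop :: "bool list \<Rightarrow> (real \<Rightarrow> real \<Rightarrow> real) \<Rightarrow> real \<Rightarrow> real \<Rightarrow> real" where
  "dop [] \<psi> = \<psi>"
| "dop (b # bs) \<psi> = (if b then pt (dop bs \<psi>) else px (dop bs \<psi>))"

definition smooth2 :: "(real \<Rightarrow> real \<Rightarrow> real) \<Rightarrow> bool" where
  "smooth2 \<psi> \<longleftrightarrow> (\<forall>bs. continuous_on UNIV (\<lambda>p::real\<times>real. dop bs \<psi> (fst p) (snd p)) \<and>
      (\<forall>t x. (\<lambda>s. dop bs \<psi> s x) differentiable (at t) \<and> (\<lambda>y. dop bs \<psi> t y) differentiable (at x)))"

definition test_fn :: "(real \<Rightarrow> real \<Rightarrow> real) \<Rightarrow> bool" where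
  "test_fn \<psi> \<longleftrightarrow> smooth2 \<psi> \<and> (\<forall>t x. \<psi> t (x + 1) = \<psi> t x) \<and> (\<exists>T. \<forall>t\<ge>T. \<forall>x. \<psi> t x = 0)"

definition iint :: "(real \<Rightarrow> real \<Rightarrow> real) \<Rightarrow> real" where
  "iint F = set_lebesgue_integral lborel ({0..} \<times> {0..1}) (\<lambda>p::real\<times>real. F (fst p) (snd p))"

definition sint :: "(real \<Rightarrow> real) \<Rightarrow> real" where
  "sint w = (LBINT x:{0..1}. w x)"

definition wfun :: "(real \<Rightarrow> real \<Rightarrow> real) \<Rightarrow> (real \<Rightarrow> real \<Rightarrow> real) \<Rightarrow> real \<Rightarrow> real \<Rightarrow> real" where
  "wfun u ux t y = u t y - u t y * (ux t y)^2"

definition ffun :: "real \<Rightarrow> (real \<Rightarrow> real \<Rightarrow> real) \<Rightarrow> (real \<Rightarrow> real \<Rightarrow> real) \<Rightarrow> real \<Rightarrow> real" where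
  "ffun h u ux t = 1 / (1 - h) * sint (\<lambda>y. (1 - (ux t y)^2) * dxinv (wfun u ux t) y)"

text \<open>Global admissible conservative weak solution u (with weak x-derivative ux)
  for initial datum u0 (with derivative u0x).\<close>
definition gacws :: "(real \<Rightarrow> real \<Rightarrow> real) \<Rightarrow> (real \<Rightarrow> real \<Rightarrow> real) \<Rightarrow> (real \<Rightarrow> real) \<Rightarrow> (real \<Rightarrow> real) \<Rightarrow> bool" where
  "gacws u ux u0 u0x \<longleftrightarrow>
    (let h = sint (\<lambda>x. (u0x x)^2) in
    \<comment> \<open>u \<in> L^\<infinity>(R^+; H^1(S))\<close>
    (\<lambda>p::real\<times>real. u (fst p) (snd p)) \<in> borel_measurable lborel \<and>
    (\<lambda>p::real\<times>real. ux (fst p) (snd p)) \<in> borel_measurable lborel \<and>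
    (\<forall>t\<ge>0. H1rep (u t) (ux t)) \<and>
    (\<exists>M. \<forall>t\<ge>0. sint (\<lambda>x. (u t x)^2 + (ux t x)^2) \<le> M) \<and>
    \<comment> \<open>(i)\<close>
    (\<forall>\<psi>. test_fn \<psi> \<longrightarrow>
       iint (\<lambda>t x. u t x * pt (px \<psi>) t x + (u t x)^2 * ux t x * px \<psi> t x)
       = iint (\<lambda>t x. (wfun u ux t x - cmean (wfun u ux t)) * \<psi> t x)
         + sint (\<lambda>x. u0x x * \<psi> 0 x)) \<and>
    \<comment> \<open>(ii)\<close>
    (\<forall>\<psi>. test_fn \<psi> \<longrightarrow>
       iint (\<lambda>t x. u t x * pt \<psi> t x - 1/3 * (u t x)^3 * px \<psi> t x)
       = - iint (\<lambda>t x. (dxinv (wfun u ux t) x - ffun h u ux t) * \<psi> t x)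
         - sint (\<lambda>x. u0 x * \<psi> 0 x)) \<and>
    \<comment> \<open>(iii)\<close>
    (\<forall>t\<ge>0. \<forall>s\<ge>0. sint (\<lambda>x. (ux t x)^2) = sint (\<lambda>x. (ux s x)^2)) \<and>
    (\<forall>t\<ge>0. \<forall>s\<ge>0. sint (wfun u ux t) = sint (wfun u ux s)) \<and>
    \<comment> \<open>(iv)\<close>
    (\<forall>\<psi>. test_fn \<psi> \<longrightarrow>
       iint (\<lambda>t x. (ux t x)^2 * pt \<psi> t x - (u t x)^2 * (ux t x)^2 * px \<psi> t x)
       = - iint (\<lambda>t x. (2 * u t x * ux t x - 2 * ux t x * cmean (wfun u ux t)) * \<psi> t x)
         - sint (\<lambda>x. (u0x x)^2 * \<psi> 0 x)))"

definition ychar :: "real \<Rightarrow> (real \<Rightarrow> real \<Rightarrow> real) \<Rightarrow> real \<Rightarrow> real \<Rightarrow> real" where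
  "ychar h ux t \<beta> = (THE y. y + (LBINT z=ereal 0..ereal y. (ux t z)^2) = (1 + h) * \<beta>)"

end

theory Submission
  imports Defs
begin

lemma per_int_shift:
  fixes f :: "real \<Rightarrow> real"
  assumes "\<And>x. f (x + 1) = f x"
  shows "f (x + of_int n) = f x"
proof -
  have pos: "f (y + real m) = f y" for y m
  proof (induction m)
    case (Suc m)
    have "y + real (Suc m) = (y + real m) + 1" by simp
    then show ?case using Suc assms by metis
  qed simp
  show ?thesis
  proof (cases "n \<ge> 0")
    case True then show ?thesis using pos[of x "nat n"] by simp
  next
    case False
    then have "x = (x + of_int n) + real (nat (-n))" by simp
    then show ?thesis using pos[of "x + of_int n" "nat (-n)"] by simp
  qed
qed

lemma per_int:
  assumes "\<And>x. f (x + 1) = f x" "set_integrable lborel {0..1} (f::real\<Rightarrow>real)"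
  shows "set_integrable lborel {a..b} f"
proof -
  have one: "set_integrable lborel {of_int n..of_int n + 1} f" for n :: int
  proof -
    let ?F = "\<lambda>x. indicator {of_int n..of_int n + 1} x *\<^sub>R f x"
    have "(\<lambda>x. ?F (of_int n + 1 * x)) = (\<lambda>x. indicator {0..1} x *\<^sub>R f x)"
      using per_int_shift[of f, OF assms(1)]
      by (auto simp: indicator_def add.commute)
    then have "integrable lborel (\<lambda>x. ?F (of_int n + 1 * x))"
      using assms(2) by (simp add: set_integrable_def)
    then show ?thesis unfolding set_integrable_def
      using lborel_integrable_real_affine_iff[of 1 ?F "of_int n"] by simp
  qed
  have U: "set_integrable lborel (\<Union>n\<in>{\<lfloor>a\<rfloor>..\<lceil>b\<rceil>}. {of_int n..of_int n + 1::real}) f"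
    by (rule set_integrable_UN) (auto intro: one)
  show ?thesis
  proof (rule set_integrable_subset[OF U])
    show "{a..b} \<subseteq> (\<Union>n\<in>{\<lfloor>a\<rfloor>..\<lceil>b\<rceil>}. {of_int n..of_int n + 1::real})"
    proof
      fix x assume x: "x \<in> {a..b}"
      have "\<lfloor>x\<rfloor> \<in> {\<lfloor>a\<rfloor>..\<lceil>b\<rceil>}" using x
        by (auto intro: floor_mono order_trans[OF floor_le_ceiling ceiling_mono])
      moreover have "x \<in> {of_int \<lfloor>x\<rfloor>..of_int \<lfloor>x\<rfloor> + 1}" by (simp add: less_imp_le)
      ultimately show "x \<in> (\<Union>n\<in>{\<lfloor>a\<rfloor>..\<lceil>b\<rceil>}. {of_int n..of_int n + 1})" by blast
    qed
  qed simp
qed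
lemma ilint:
  assumes "\<And>a b. set_integrable lborel {a..b} (k::real\<Rightarrow>real)"
  shows "interval_lebesgue_integrable lborel (ereal a) (ereal b) k"
  unfolding interval_lebesgue_integrable_def einterval_def
  using assms by (auto intro: set_integrable_subset[of _ "{min a b..max a b}"])

lemma idiff:
  assumes "\<And>a b. set_integrable lborel {a..b} (k::real\<Rightarrow>real)" "a \<le> b"
  shows "(LBINT z=ereal 0..ereal b. k z) - (LBINT z=ereal 0..ereal a. k z) = (LBINT z:{a..b}. k z)"
proof -
  have "(LBINT z=ereal a..ereal 0. k z) + (LBINT z=ereal 0..ereal b. k z) = (LBINT z=ereal a..ereal b. k z)"
    apply (rule interval_integral_sum)
    using ilint[OF assms(1)] by (simp add: min_def max_def)
  moreover have "(LBINT z=ereal a..ereal 0. k z) = - (LBINT z=ereal 0..ereal a. k z)"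
    by (rule interval_integral_endpoints_reverse)
  ultimately show ?thesis using interval_integral_Icc[OF assms(2), of k] by simp
qed

lemma sint_nonneg:
  assumes "\<And>x. 0 \<le> (k::real\<Rightarrow>real) x"
  shows "0 \<le> (LBINT z:A. k z)"
  unfolding set_lebesgue_integral_def
  by (rule Bochner_Integration.integral_nonneg) (auto simp: assms indicator_def)

lemma abs_le_sq: "\<bar>x::real\<bar> \<le> 1 + x^2"
proof (cases "\<bar>x\<bar> \<le> 1")
  case True then show ?thesis using zero_le_power2[of x] by linarith
next
  case False
  then have "\<bar>x\<bar> * 1 \<le> \<bar>x\<bar> * \<bar>x\<bar>" by (intro mult_left_mono) auto
  also have "\<dots> = x^2" by (simp add: power2_eq_square abs_mult[symmetric])
  finally show ?thesis by simp
qed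

lemma core:
  fixes v g :: "real \<Rightarrow> real" and c :: real
  assumes int: "\<And>a b. set_integrable lborel {a..b} (\<lambda>z. (g z)^2)"
    and gm: "g \<in> borel_measurable lborel"
    and vrep: "\<And>x. v x = v 0 + (LBINT z=ereal 0..ereal x. g z)"
    and c: "c \<ge> 0"
  shows "c-lipschitz_on UNIV (\<lambda>\<beta>. THE y. y + (LBINT z=ereal 0..ereal y. (g z)^2) = c * \<beta>)
       \<and> c-lipschitz_on UNIV (\<lambda>\<beta>. v (THE y. y + (LBINT z=ereal 0..ereal y. (g z)^2) = c * \<beta>))"
proof -
  define G where "G y = (LBINT z=ereal 0..ereal y. (g z)^2)" for y
  define F where "F y = y + G y" for y
  have const: "set_integrable lborel {a..b} (\<lambda>_. 1::real)" for a b :: real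
    by (rule borel_integrable_atLeastAtMost') simp
  have int1: "set_integrable lborel {a..b} (\<lambda>z. 1 + (g z)^2)" for a b
    using const int by (rule set_integral_add)
  have gint: "set_integrable lborel {a..b} g" for a b
  proof (rule set_integrable_bound[OF int1])
    show "set_borel_measurable lborel {a..b} g"
      unfolding set_borel_measurable_def using gm by measurable
    have "norm (g x) \<le> norm (1 + (g x)^2)" for x
    proof -
      have "0 \<le> 1 + (g x)^2" using zero_le_power2[of "g x"] by linarith
      then show ?thesis using abs_le_sq[of "g x"] by simp
    qed
    then show "AE x in lborel. x \<in> {a..b} \<longrightarrow> norm (g x) \<le> norm (1 + (g x)^2)"
      by (intro AE_I2 impI)
  qed
  have Gd: "G b - G a = (LBINT z:{a..b}. (g z)^2)" if "a \<le> b" for a b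
    unfolding G_def by (rule idiff[OF int that])
  have Fd: "b - a \<le> F b - F a" if "a \<le> b" for a b
    using Gd[OF that] sint_nonneg[of "\<lambda>z. (g z)^2" "{a..b}"] unfolding F_def by simp
  have vd: "\<bar>v b - v a\<bar> \<le> F b - F a" if ab: "a \<le> b" for a b
  proof -
    have "v b - v a = (LBINT z:{a..b}. g z)"
      using idiff[OF gint ab] vrep[of a] vrep[of b] by simp
    also have "\<bar>\<dots>\<bar> \<le> (LBINT z:{a..b}. \<bar>g z\<bar>)"
      using set_integral_norm_bound[OF gint[of a b]] by simp
    also have "\<dots> \<le> (LBINT z:{a..b}. 1 + (g z)^2)"
    proof (rule set_integral_mono[OF set_integrable_abs[OF gint] int1])
      fix x
      show "\<bar>g x\<bar> \<le> 1 + (g x)^2" by (rule abs_le_sq)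
    qed
    also have "\<dots> = (b - a) + (LBINT z:{a..b}. (g z)^2)"
      using set_integral_add(2)[OF const int, of a b] set_integral_const[of "{a..b}" lborel "1::real"] ab
      by simp
    also have "\<dots> = F b - F a" using Gd[OF ab] unfolding F_def by simp
    finally show ?thesis .
  qed
  have G0: "G 0 = 0" unfolding G_def by simp
  have Fcont: "continuous_on {-N..N} F" if N: "N \<ge> 0" for N
  proof -
    have ion: "(\<lambda>z. (g z)^2) integrable_on {-N..N}"
      using set_borel_integral_eq_integral(1)[OF int] .
    have eq: "G y = G (-N) + integral {-N..y} (\<lambda>z. (g z)^2)" if "y \<in> {-N..N}" for y
      using Gd[of "-N" y] that set_borel_integral_eq_integral(2)[OF int[of "-N" y]] by simp
    have "continuous_on {-N..N} (\<lambda>y. G (-N) + integral {-N..y} (\<lambda>z. (g z)^2))"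
      by (intro continuous_intros indefinite_integral_continuous_1 ion)
    then have "continuous_on {-N..N} G"
      by (rule continuous_on_eq) (rule sym, rule eq)
    then show ?thesis unfolding F_def by (intro continuous_intros)
  qed
  have ex: "\<exists>y. F y = d" for d
  proof -
    define N where "N = \<bar>d\<bar> + 1"
    have N: "N \<ge> 0" unfolding N_def by simp
    have F0: "F 0 = 0" using G0 by (simp add: F_def)
    have "F N - F 0 \<ge> N" using Fd[of 0 N] N by simp
    then have hi: "d \<le> F N" using F0 abs_ge_self[of d] N_def by linarith
    have "F 0 - F (-N) \<ge> N" using Fd[of "-N" 0] N by simp
    then have lo: "F (-N) \<le> d" using F0 abs_ge_minus_self[of d] N_def by linarith
    have "-N \<le> N" using N by simp
    from IVT'[of F "-N" d N, OF lo hi this Fcont[OF N]] show ?thesis by blast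
  qed
  have uniq: "x = y" if "F x = F y" for x y
  proof (cases "x \<le> y")
    case True with Fd[of x y] that show ?thesis by linarith
  next
    case False with Fd[of y x] that show ?thesis by linarith
  qed
  define Y where "Y \<beta> = (THE y. F y = c * \<beta>)" for \<beta>
  have FY: "F (Y \<beta>) = c * \<beta>" for \<beta>
  proof -
    obtain y where y: "F y = c * \<beta>" using ex by blast
    have "\<exists>!y. F y = c * \<beta>"
    proof (rule ex1I[of _ y])
      show "F y = c * \<beta>" by (rule y)
      fix x assume "F x = c * \<beta>"
      with y have "F x = F y" by simp
      then show "x = y" by (rule uniq)
    qed
    then show ?thesis unfolding Y_def by (rule theI')
  qed
  have Feq: "\<bar>F (Y \<beta>1) - F (Y \<beta>2)\<bar> = c * \<bar>\<beta>1 - \<beta>2\<bar>" for \<beta>1 \<beta>2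
  proof -
    have "F (Y \<beta>1) - F (Y \<beta>2) = c * (\<beta>1 - \<beta>2)"
      unfolding FY by (simp add: right_diff_distrib)
    then show ?thesis using c by (simp add: abs_mult)
  qed
  have Y1: "\<bar>Y \<beta>1 - Y \<beta>2\<bar> \<le> c * \<bar>\<beta>1 - \<beta>2\<bar>" for \<beta>1 \<beta>2
  proof -
    have "\<bar>Y \<beta>1 - Y \<beta>2\<bar> \<le> \<bar>F (Y \<beta>1) - F (Y \<beta>2)\<bar>"
    proof (cases "Y \<beta>1 \<le> Y \<beta>2")
      case True with Fd[of "Y \<beta>1" "Y \<beta>2"] show ?thesis by linarith
    next
      case False with Fd[of "Y \<beta>2" "Y \<beta>1"] show ?thesis by linarith
    qed
    then show ?thesis using Feq[of \<beta>1 \<beta>2] by linarith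
  qed
  have Y2: "\<bar>v (Y \<beta>1) - v (Y \<beta>2)\<bar> \<le> c * \<bar>\<beta>1 - \<beta>2\<bar>" for \<beta>1 \<beta>2
  proof -
    have "\<bar>v (Y \<beta>1) - v (Y \<beta>2)\<bar> \<le> \<bar>F (Y \<beta>1) - F (Y \<beta>2)\<bar>"
    proof (cases "Y \<beta>1 \<le> Y \<beta>2")
      case True with vd[of "Y \<beta>1" "Y \<beta>2"] show ?thesis by linarith
    next
      case False with vd[of "Y \<beta>2" "Y \<beta>1"] show ?thesis by linarith
    qed
    then show ?thesis using Feq[of \<beta>1 \<beta>2] by linarith
  qed
  have YY: "(\<lambda>\<beta>. THE y. y + (LBINT z=ereal 0..ereal y. (g z)^2) = c * \<beta>) = Y"
    unfolding Y_def F_def G_def by (rule refl)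
  have L1: "c-lipschitz_on UNIV Y"
    by (rule lipschitz_onI) (use Y1 c in \<open>simp_all add: dist_real_def\<close>)
  have L2: "c-lipschitz_on UNIV (\<lambda>\<beta>. v (Y \<beta>))"
    by (rule lipschitz_onI) (use Y2 c in \<open>simp_all add: dist_real_def\<close>)
  have YYb: "(THE y. y + (LBINT z=ereal 0..ereal y. (g z)^2) = c * \<beta>) = Y \<beta>" for \<beta>
    unfolding Y_def F_def G_def by (rule refl)
  show ?thesis unfolding YYb using L1 L2 by simp
qed
theorem lemma5p4:
  fixes u ux :: "real \<Rightarrow> real \<Rightarrow> real" and u0 u0x :: "real \<Rightarrow> real" and h :: real
  assumes "H1rep u0 u0x"
    and "h = sint (\<lambda>x. (u0x x)^2)"
    and "h \<noteq> 1"
    and "gacws u ux u0 u0x"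
    and "t \<ge> 0"
  shows "(1 + h)-lipschitz_on UNIV (\<lambda>\<beta>. ychar h ux t \<beta>)
       \<and> (1 + h)-lipschitz_on UNIV (\<lambda>\<beta>. u t (ychar h ux t \<beta>))"
proof -
  have "H1rep (u t) (ux t)" using assms(4,5) unfolding gacws_def Let_def by blast
  then have per: "\<And>x. ux t (x + 1) = ux t x" and gm: "ux t \<in> borel_measurable lborel"
    and i01: "set_integrable lborel {0..1} (\<lambda>x. (ux t x)^2)"
    and rep: "\<And>x. u t x = u t 0 + (LBINT z=ereal 0..ereal x. ux t z)"
    unfolding H1rep_def by blast+
  have per2: "\<And>x. (\<lambda>x. (ux t x)^2) (x + 1) = (\<lambda>x. (ux t x)^2) x" using per by simp
  have int: "\<And>a b. set_integrable lborel {a..b} (\<lambda>z. (ux t z)^2)"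
    using per_int[OF per2 i01] by simp
  have h0: "0 \<le> h" unfolding assms(2) sint_def by (rule sint_nonneg) simp
  have c: "0 \<le> 1 + h" using h0 by simp
  show ?thesis unfolding ychar_def using core[OF int gm rep c] by simp
qed

end
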